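(* Let $\lambda \in [0,1]$ and let $L$ be a PLD realization. Define $\phi_{\lambda}(l) \coloneqq \ln\!\left(1 + (e^{l}-1)/\lambda\right)$ and define two random variables $\varphi^{\mathrm{rem}}_{\lambda}(L)$ and $\varphi^{\mathrm{add}}_{\lambda}(L)$ through their probability mass functions: for every $l \in [-\infty,\infty]$, \[ f_{\varphi^{\mathrm{rem}}_{\lambda}(L)}(l) \coloneqq \lambda\, f_{L}\big(\phi_{\lambda}(l)\big) + (1-\lambda)\, f_{-\widetilde{L}}\big(\phi_{\lambda}(l)\big), \qquad f_{\varphi^{\mathrm{add}}_{\lambda}(L)}(l) \coloneqq f_{L}\big(-\phi_{\lambda}(-l)\big), \] where $\widetilde{L}$ is the PLD dual of $L$ and $f_{-\widetilde{L}}(x) = f_{\widetilde{L}}(-x)$. Then for any two discrete distributions $P, Q$ on a common domain, with $P_{\lambda} \coloneqq \lambda P + (1-\lambda) Q$, we have that $\mathcal{L}_{P_{\lambda}/Q}$ is distributed as $\varphi^{\mathrm{rem}}_{\lambda}(\mathcal{L}_{P/Q})$ and $\mathcal{L}_{Q/P_{\lambda}}$ is distributed as $\varphi^{\mathrm{add}}_{\lambda}(\mathcal{L}_{Q/P})$.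
   Context: Privacy loss random variable: for distributions $P,Q$ on a domain $\Omega$, $\mathcal{L}_{P/Q}$ is the random variable $\ln\big(P(\omega)/Q(\omega)\big)$ with $\omega \sim P$ (taking values in $[-\infty,\infty]$); its distribution is the privacy loss distribution (PLD). A discrete random variable $L$ on $[-\infty,\infty]$ with PMF $f_L$ is a PLD realization if $\mathbb{E}[e^{-L}] \le 1$ and $f_L(-\infty) = 0$. The PLD dual of a PLD realization $L$ is the random variable $\widetilde{L}$ with PMF $f_{\widetilde{L}}(l) = f_L(-l)\, e^{l}$ for finite $l$ and with an atom at $+\infty$ of mass $f_{\widetilde{L}}(\infty) \coloneqq 1 - \mathbb{E}[e^{-L}]$. *)

theory Defs
  imports "HOL-Probability.Probability"
begin

(* Pointwise log-likelihood ratio ln(p/q) in [-oo,oo]; the case p = 0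
   never occurs with positive probability when omega ~ P. *)
definition llr :: "real \<Rightarrow> real \<Rightarrow> ereal" where
  "llr p q = (if q = 0 then \<infinity> else if p = 0 then - \<infinity> else ereal (ln (p / q)))"

definition privacy_loss :: "'a pmf \<Rightarrow> 'a pmf \<Rightarrow> ereal pmf" where
  "privacy_loss P Q = map_pmf (\<lambda>\<omega>. llr (pmf P \<omega>) (pmf Q \<omega>)) P"

definition mixture :: "real \<Rightarrow> 'a pmf \<Rightarrow> 'a pmf \<Rightarrow> 'a pmf" where
  "mixture lam P Q = bind_pmf (bernoulli_pmf lam) (\<lambda>b. if b then P else Q)"

definition exp_neg :: "ereal \<Rightarrow> ennreal" where
  "exp_neg l = (if l = \<infinity> then 0 else if l = - \<infinity> then \<top> else ennreal (exp (- real_of_ereal l)))"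

definition exp_moment :: "ereal pmf \<Rightarrow> ennreal" where
  "exp_moment L = (\<integral>\<^sup>+ l. exp_neg l \<partial>measure_pmf L)"

definition pld_realization :: "ereal pmf \<Rightarrow> bool" where
  "pld_realization L \<longleftrightarrow> exp_moment L \<le> 1 \<and> pmf L (- \<infinity>) = 0"

definition dual_pmf :: "ereal pmf \<Rightarrow> ereal \<Rightarrow> real" where
  "dual_pmf L l = (if l = \<infinity> then 1 - enn2real (exp_moment L)
                   else if l = - \<infinity> then 0
                   else pmf L (- l) * exp (real_of_ereal l))"

definition neg_dual_pmf :: "ereal pmf \<Rightarrow> ereal \<Rightarrow> real" where
  "neg_dual_pmf L x = dual_pmf L (- x)"

definition phi_arg :: "real \<Rightarrow> ereal \<Rightarrow> ereal" where
  "phi_arg lam l = (if l = \<infinity> then \<infinity>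
                    else if l = - \<infinity> then ereal (1 - 1 / lam)
                    else ereal (1 + (exp (real_of_ereal l) - 1) / lam))"

definition phi :: "real \<Rightarrow> ereal \<Rightarrow> ereal option" where
  "phi lam l = (let a = phi_arg lam l in
                 if a < 0 then None
                 else if a = 0 then Some (- \<infinity>)
                 else if a = \<infinity> then Some \<infinity>
                 else Some (ereal (ln (real_of_ereal a))))"

definition phi_rem_pmf :: "real \<Rightarrow> ereal pmf \<Rightarrow> ereal \<Rightarrow> real" where
  "phi_rem_pmf lam L l = (case phi lam l of None \<Rightarrow> 0
                           | Some x \<Rightarrow> lam * pmf L x + (1 - lam) * neg_dual_pmf L x)"

definition phi_add_pmf :: "real \<Rightarrow> ereal pmf \<Rightarrow> ereal \<Rightarrow> real" where
  "phi_add_pmf lam L l = (case phi lam (- l) of None \<Rightarrow> 0 | Some x \<Rightarrow> pmf L (- x))"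

end

theory Submission
  imports Defs
begin


lemma mix_pmf:
  assumes "0 \<le> lam" "lam \<le> 1"
  shows "pmf (mixture lam P Q) x = lam * pmf P x + (1 - lam) * pmf Q x"
  using assms by (simp add: mixture_def pmf_bind)

lemma pmf_map_int:
  "ennreal (pmf (map_pmf f M) y) = (\<integral>\<^sup>+x. ennreal (if f x = y then pmf M x else 0) \<partial>count_space UNIV)"
  unfolding ennreal_pmf_map nn_integral_measure_pmf
  by (intro nn_integral_cong) (auto simp: indicator_def)

lemma int_cmult:
  assumes "0 \<le> c" "\<And>x. 0 \<le> g x"
  shows "(\<integral>\<^sup>+x. ennreal (c * g x) \<partial>count_space UNIV) = ennreal c * (\<integral>\<^sup>+x. ennreal (g x) \<partial>count_space UNIV)"
  using assms by (simp add: ennreal_mult nn_integral_cmult)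

lemma int_add:
  assumes "\<And>x. 0 \<le> f x" "\<And>x. 0 \<le> g x"
  shows "(\<integral>\<^sup>+x. ennreal (f x + g x) \<partial>count_space UNIV) = (\<integral>\<^sup>+x. ennreal (f x) \<partial>count_space UNIV) + (\<integral>\<^sup>+x. ennreal (g x) \<partial>count_space UNIV)"
  using assms by (simp add: ennreal_plus nn_integral_add)

lemma llr_inf: "llr x y = \<infinity> \<longleftrightarrow> y = 0"
  by (simp add: llr_def)

lemma llr_minf: "llr x y = - \<infinity> \<longleftrightarrow> y \<noteq> 0 \<and> x = 0"
  by (simp add: llr_def)

lemma llr_fin:
  assumes "0 \<le> x" "0 \<le> y"
  shows "llr x y = ereal r \<longleftrightarrow> (0 < y \<and> x = exp r * y)"
proof (cases "y = 0 \<or> x = 0")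
  case True then show ?thesis using assms by (auto simp: llr_def)
next
  case False
  then have xy: "0 < x" "0 < y" using assms by auto
  have "ln (x / y) = r \<longleftrightarrow> x / y = exp r"
    using xy by (metis divide_pos_pos exp_ln ln_exp)
  also have "\<dots> \<longleftrightarrow> x = exp r * y" using xy by (auto simp: field_simps)
  finally show ?thesis using xy by (simp add: llr_def)
qed

lemma pw_rem_fin:
  assumes "0 < lam" "lam \<le> 1" "0 \<le> p" "0 \<le> q"
  shows "llr (lam*p+(1-lam)*q) q = ereal r \<longleftrightarrow> (0 < q \<and> p = (1 + (exp r - 1)/lam) * q)"
proof -
  have m: "0 \<le> lam*p+(1-lam)*q" using assms by simp
  have "lam*p+(1-lam)*q = exp r * q \<longleftrightarrow> p = (1 + (exp r - 1)/lam) * q"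
    using assms by (auto simp: field_simps)
  then show ?thesis using llr_fin[OF m assms(4)] by simp
qed

lemma pw_add_fin:
  assumes "0 < lam" "lam \<le> 1" "0 \<le> p" "0 \<le> q"
  shows "llr q (lam*p+(1-lam)*q) = ereal r \<longleftrightarrow> (0 < q \<and> p = (1 + (exp (-r) - 1)/lam) * q)"
proof -
  define m where "m = lam*p+(1-lam)*q"
  have m: "0 \<le> m" using assms by (simp add: m_def)
  have e: "q = exp r * m \<longleftrightarrow> m = exp (-r) * q"
    by (auto simp: exp_minus field_simps)
  have "(0 < m \<and> q = exp r * m) \<longleftrightarrow> (0 < q \<and> m = exp (-r) * q)"
    using e by (auto simp: zero_less_mult_iff)
  moreover have "m = exp (-r) * q \<longleftrightarrow> p = (1 + (exp (-r) - 1)/lam) * q"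
    using assms by (auto simp: field_simps m_def)
  ultimately show ?thesis using llr_fin[OF assms(4) m] by (simp add: m_def)
qed

lemma exp_moment_pl:
  "exp_moment (privacy_loss P Q) = (\<integral>\<^sup>+\<omega>. ennreal (if pmf P \<omega> = 0 then 0 else pmf Q \<omega>) \<partial>count_space UNIV)"
  unfolding exp_moment_def privacy_loss_def nn_integral_map_pmf
  unfolding nn_integral_measure_pmf
proof (intro nn_integral_cong)
  fix \<omega>
  define p where "p = pmf P \<omega>"
  define q where "q = pmf Q \<omega>"
  have "ennreal p * exp_neg (llr p q) = ennreal (if p = 0 then 0 else q)"
  proof (cases "p = 0 \<or> q = 0")
    case True then show ?thesis by (auto simp: llr_def exp_neg_def)
  next
    case False
    then have "0 < p" "0 < q" by (auto simp: p_def q_def pmf_nonneg order.strict_iff_order)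
    then have "p * exp (- ln (p / q)) = q" by (simp add: exp_minus exp_ln field_simps)
    then show ?thesis using False \<open>0 < p\<close> \<open>0 < q\<close>
      by (simp add: llr_def exp_neg_def ennreal_mult[symmetric])
  qed
  then show "ennreal (pmf P \<omega>) * exp_neg (llr (pmf P \<omega>) (pmf Q \<omega>)) = ennreal (if pmf P \<omega> = 0 then 0 else pmf Q \<omega>)"
    by (simp add: p_def q_def)
qed

lemma dual_inf_pl:
  "dual_pmf (privacy_loss P Q) \<infinity> = enn2real (\<integral>\<^sup>+\<omega>. ennreal (if pmf P \<omega> = 0 then pmf Q \<omega> else 0) \<partial>count_space UNIV)"
proof -
  define E where "E = (\<integral>\<^sup>+\<omega>. ennreal (if pmf P \<omega> = 0 then 0 else pmf Q \<omega>) \<partial>count_space UNIV)"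
  define Z where "Z = (\<integral>\<^sup>+\<omega>. ennreal (if pmf P \<omega> = 0 then pmf Q \<omega> else 0) \<partial>count_space UNIV)"
  have "E + Z = (\<integral>\<^sup>+\<omega>. ennreal ((if pmf P \<omega> = 0 then 0 else pmf Q \<omega>) + (if pmf P \<omega> = 0 then pmf Q \<omega> else 0)) \<partial>count_space UNIV)"
    unfolding E_def Z_def by (rule int_add[symmetric]) auto
  also have "\<dots> = (\<integral>\<^sup>+\<omega>. ennreal (pmf Q \<omega>) \<partial>count_space UNIV)"
    by (intro nn_integral_cong) auto
  also have "\<dots> = 1" by (simp add: nn_integral_pmf)
  finally have EZ: "E + Z = 1" .
  then have fin: "E < \<top>" "Z < \<top>" by (metis ennreal_one_less_top ennreal_add_less_top)+
  have "enn2real E + enn2real Z = 1" using EZ fin by (metis enn2real_plus enn2real_1)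
  then show ?thesis
    by (simp add: dual_pmf_def exp_moment_pl E_def[symmetric] Z_def[symmetric])
qed

lemma ennreal_eqD: "ennreal a = ennreal b \<Longrightarrow> 0 \<le> a \<Longrightarrow> 0 \<le> b \<Longrightarrow> a = b"
  by (simp add: ennreal_inj)

lemma pmf_L:
  "ennreal (pmf (privacy_loss P Q) x) = (\<integral>\<^sup>+\<omega>. ennreal (if llr (pmf P \<omega>) (pmf Q \<omega>) = x then pmf P \<omega> else 0) \<partial>count_space UNIV)"
  unfolding privacy_loss_def pmf_map_int by simp

lemma rem_part:
  assumes lam: "0 < lam" "lam \<le> 1"
  shows "pmf (privacy_loss (mixture lam P Q) Q) l = phi_rem_pmf lam (privacy_loss P Q) l"
proof -
  define L where "L = privacy_loss P Q"
  define m where "m = (\<lambda>x. lam * pmf P x + (1-lam) * pmf Q x)"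
  have pm: "pmf (mixture lam P Q) x = m x" for x unfolding m_def using lam by (simp add: mix_pmf)
  have m0: "0 \<le> m x" for x unfolding m_def using lam by simp
  have LHS: "ennreal (pmf (privacy_loss (mixture lam P Q) Q) l) =
     (\<integral>\<^sup>+x. ennreal (if llr (m x) (pmf Q x) = l then m x else 0) \<partial>count_space UNIV)"
    unfolding privacy_loss_def pmf_map_int pm by simp
  have Lx: "ennreal (pmf L x) = (\<integral>\<^sup>+\<omega>. ennreal (if llr (pmf P \<omega>) (pmf Q \<omega>) = x then pmf P \<omega> else 0) \<partial>count_space UNIV)" for x
    unfolding L_def by (rule pmf_L)
  have Lminf: "pmf L (-\<infinity>) = 0"
  proof -
    have "ennreal (pmf L (-\<infinity>)) = (\<integral>\<^sup>+\<omega>. ennreal 0 \<partial>count_space (UNIV :: 'a set))"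
      unfolding Lx by (rule nn_integral_cong) (auto simp: llr_minf)
    then show ?thesis by simp
  qed
  show ?thesis
  proof (cases l rule: ereal_cases)
    case PInf
    have ph: "phi lam \<infinity> = Some \<infinity>" by (simp add: phi_def phi_arg_def)
    have rhs: "phi_rem_pmf lam L \<infinity> = lam * pmf L \<infinity>"
      by (simp add: phi_rem_pmf_def ph neg_dual_pmf_def dual_pmf_def)
    have "ennreal (pmf (privacy_loss (mixture lam P Q) Q) l) =
      (\<integral>\<^sup>+x. ennreal (lam * (if llr (pmf P x) (pmf Q x) = \<infinity> then pmf P x else 0)) \<partial>count_space UNIV)"
      unfolding LHS unfolding PInf by (intro nn_integral_cong) (auto simp: llr_inf m_def)
    also have "\<dots> = ennreal (lam * pmf L \<infinity>)"
      using lam by (subst int_cmult) (auto simp: Lx ennreal_mult)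
    finally show ?thesis using rhs PInf lam by (auto simp: L_def intro!: ennreal_eqD)
  next
    case MInf
    have "ennreal (pmf (privacy_loss (mixture lam P Q) Q) l) = (\<integral>\<^sup>+\<omega>. ennreal 0 \<partial>count_space (UNIV :: 'a set))"
      unfolding LHS unfolding MInf by (intro nn_integral_cong) (auto simp: llr_minf)
    then have l0: "pmf (privacy_loss (mixture lam P Q) Q) l = 0" by simp
    show ?thesis
    proof (cases "lam = 1")
      case True
      then have "phi lam (-\<infinity>) = Some (-\<infinity>)" by (simp add: phi_def phi_arg_def)
      then show ?thesis using l0 MInf True Lminf
        by (simp add: phi_rem_pmf_def L_def)
    next
      case False
      then have "1 - 1/lam < 0" using lam by (simp add: field_simps)
      then have "phi lam (-\<infinity>) = None" by (simp add: phi_def phi_arg_def)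
      then show ?thesis using l0 MInf by (simp add: phi_rem_pmf_def)
    qed
  next
    case (real r)
    define a where "a = 1 + (exp r - 1) / lam"
    have pa: "phi_arg lam l = ereal a" by (simp add: phi_arg_def real a_def)
    have cond: "llr (m x) (pmf Q x) = ereal r \<longleftrightarrow> (0 < pmf Q x \<and> pmf P x = a * pmf Q x)" for x
      unfolding m_def a_def by (rule pw_rem_fin) (use lam in auto)
    consider "a < 0" | "a = 0" | "a > 0" by linarith
    then show ?thesis
    proof cases
      case 1
      then have "phi lam l = None" by (simp add: phi_def pa)
      moreover have "ennreal (pmf (privacy_loss (mixture lam P Q) Q) l) = (\<integral>\<^sup>+\<omega>. ennreal 0 \<partial>count_space (UNIV :: 'a set))"
        unfolding LHS unfolding real
      proof (intro nn_integral_cong)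
        fix x
        have "\<not> (0 < pmf Q x \<and> pmf P x = a * pmf Q x)"
          using 1 pmf_nonneg[of P x] mult_neg_pos[of a "pmf Q x"] by smt
        then show "ennreal (if llr (m x) (pmf Q x) = ereal r then m x else 0) = ennreal 0"
          using cond by auto
      qed
      ultimately show ?thesis by (simp add: phi_rem_pmf_def)
    next
      case 2
      then have ph: "phi lam l = Some (-\<infinity>)" by (simp add: phi_def pa)
      define Z where "Z = (\<integral>\<^sup>+\<omega>. ennreal (if pmf P \<omega> = 0 then pmf Q \<omega> else 0) \<partial>count_space UNIV)"
      have rhs: "phi_rem_pmf lam L l = (1 - lam) * enn2real Z"
        by (simp add: phi_rem_pmf_def ph Lminf[unfolded L_def] neg_dual_pmf_def L_def dual_inf_pl Z_def)
      have Zfin: "Z \<noteq> \<top>"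
      proof -
        have "Z \<le> (\<integral>\<^sup>+\<omega>. ennreal (pmf Q \<omega>) \<partial>count_space UNIV)"
          unfolding Z_def by (intro nn_integral_mono) auto
        also have "\<dots> = 1" by (simp add: nn_integral_pmf)
        finally show ?thesis by (metis ennreal_one_neq_top neq_top_trans)
      qed
      have "ennreal (pmf (privacy_loss (mixture lam P Q) Q) l) =
        (\<integral>\<^sup>+x. ennreal ((1 - lam) * (if pmf P x = 0 then pmf Q x else 0)) \<partial>count_space UNIV)"
        unfolding LHS unfolding real
      proof (intro nn_integral_cong)
        fix x
        have qq: "pmf Q x = 0 \<or> 0 < pmf Q x" using pmf_nonneg[of Q x] by linarith
        show "ennreal (if llr (m x) (pmf Q x) = ereal r then m x else 0) = ennreal ((1 - lam) * (if pmf P x = 0 then pmf Q x else 0))"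
          using cond[of x] 2 qq by (auto simp: m_def)
      qed
      also have "\<dots> = ennreal ((1 - lam) * enn2real Z)"
        using lam Zfin by (subst int_cmult) (auto simp: Z_def[symmetric] ennreal_mult ennreal_enn2real_if)
      finally show ?thesis using rhs lam by (auto simp: L_def intro!: ennreal_eqD)
    next
      case 3
      then have ph: "phi lam l = Some (ereal (ln a))" by (simp add: phi_def pa)
      define c where "c = lam + (1 - lam) / a"
      have c0: "0 \<le> c" using lam 3 by (simp add: c_def)
      have "dual_pmf L (- ereal (ln a)) = pmf L (ereal (ln a)) / a"
        using 3 by (simp add: dual_pmf_def exp_minus exp_ln divide_inverse)
      then have rhs: "phi_rem_pmf lam L l = c * pmf L (ereal (ln a))"
        by (simp add: phi_rem_pmf_def ph neg_dual_pmf_def c_def algebra_simps)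
      have "ennreal (pmf (privacy_loss (mixture lam P Q) Q) l) =
        (\<integral>\<^sup>+x. ennreal (c * (if llr (pmf P x) (pmf Q x) = ereal (ln a) then pmf P x else 0)) \<partial>count_space UNIV)"
        unfolding LHS unfolding real
      proof (intro nn_integral_cong)
        fix x
        have c2: "llr (pmf P x) (pmf Q x) = ereal (ln a) \<longleftrightarrow> (0 < pmf Q x \<and> pmf P x = a * pmf Q x)"
          using llr_fin[of "pmf P x" "pmf Q x" "ln a"] 3 by simp
        have "m x = c * pmf P x" if h: "pmf P x = a * pmf Q x"
        proof -
          have "m x = (lam*a + 1 - lam) * pmf Q x" by (simp add: m_def h algebra_simps)
          moreover have "c * pmf P x = (lam*a + 1 - lam) * pmf Q x"
            using 3 by (simp add: c_def h field_simps)
          ultimately show ?thesis by simp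
        qed
        then show "ennreal (if llr (m x) (pmf Q x) = ereal r then m x else 0) =
          ennreal (c * (if llr (pmf P x) (pmf Q x) = ereal (ln a) then pmf P x else 0))"
          using cond[of x] c2 by auto
      qed
      also have "\<dots> = ennreal (c * pmf L (ereal (ln a)))"
        using c0 by (subst int_cmult) (auto simp: Lx ennreal_mult)
      finally show ?thesis using rhs c0 by (auto simp: L_def intro!: ennreal_eqD)
    qed
  qed
qed

lemma add_part:
  assumes lam: "0 < lam" "lam \<le> 1"
  shows "pmf (privacy_loss Q (mixture lam P Q)) l = phi_add_pmf lam (privacy_loss Q P) l"
proof -
  define L where "L = privacy_loss Q P"
  define m where "m = (\<lambda>x. lam * pmf P x + (1-lam) * pmf Q x)"
  have pm: "pmf (mixture lam P Q) x = m x" for x unfolding m_def using lam by (simp add: mix_pmf)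
  have m0: "0 \<le> m x" for x unfolding m_def using lam by simp
  have qq: "pmf Q x = 0 \<or> 0 < pmf Q x" for x using pmf_nonneg[of Q x] by linarith
  have LHS: "ennreal (pmf (privacy_loss Q (mixture lam P Q)) l) =
     (\<integral>\<^sup>+x. ennreal (if llr (pmf Q x) (m x) = l then pmf Q x else 0) \<partial>count_space UNIV)"
    unfolding privacy_loss_def pmf_map_int pm by simp
  have Lx: "ennreal (pmf L x) = (\<integral>\<^sup>+\<omega>. ennreal (if llr (pmf Q \<omega>) (pmf P \<omega>) = x then pmf Q \<omega> else 0) \<partial>count_space UNIV)" for x
    unfolding L_def by (rule pmf_L)
  have fin: "pmf (privacy_loss Q (mixture lam P Q)) l = pmf L x"
    if "\<And>\<omega>. (if llr (pmf Q \<omega>) (m \<omega>) = l then pmf Q \<omega> else 0) = (if llr (pmf Q \<omega>) (pmf P \<omega>) = x then pmf Q \<omega> else 0)" for x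
  proof (rule ennreal_eqD)
    show "ennreal (pmf (privacy_loss Q (mixture lam P Q)) l) = ennreal (pmf L x)"
      unfolding LHS Lx using that by simp
  qed auto
  have zero: "pmf (privacy_loss Q (mixture lam P Q)) l = 0"
    if "\<And>\<omega>. (if llr (pmf Q \<omega>) (m \<omega>) = l then pmf Q \<omega> else 0) = 0"
  proof -
    have "ennreal (pmf (privacy_loss Q (mixture lam P Q)) l) = (\<integral>\<^sup>+\<omega>. ennreal 0 \<partial>count_space (UNIV :: 'a set))"
      unfolding LHS using that by simp
    then show ?thesis by simp
  qed
  show ?thesis
  proof (cases l rule: ereal_cases)
    case PInf
    show ?thesis
    proof (cases "lam = 1")
      case True
      then have "phi lam (-\<infinity>) = Some (-\<infinity>)" by (simp add: phi_def phi_arg_def)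
      then have rhs: "phi_add_pmf lam L l = pmf L \<infinity>" by (simp add: phi_add_pmf_def PInf)
      have "pmf (privacy_loss Q (mixture lam P Q)) l = pmf L \<infinity>"
        by (rule fin) (simp add: PInf llr_inf m_def True)
      then show ?thesis using rhs by (simp add: L_def)
    next
      case False
      then have "1 - 1/lam < 0" using lam by (simp add: field_simps)
      then have "phi lam (-\<infinity>) = None" by (simp add: phi_def phi_arg_def)
      then have rhs: "phi_add_pmf lam L l = 0" by (simp add: phi_add_pmf_def PInf)
      have "pmf (privacy_loss Q (mixture lam P Q)) l = 0"
      proof (rule zero)
        fix \<omega>
        have "m \<omega> = 0 \<Longrightarrow> pmf Q \<omega> = 0"
        proof -
          assume h: "m \<omega> = 0"
          have "0 \<le> lam * pmf P \<omega>" "0 \<le> (1 - lam) * pmf Q \<omega>" using lam by auto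
          moreover have "lam * pmf P \<omega> + (1 - lam) * pmf Q \<omega> = 0" using h by (simp add: m_def)
          ultimately have "(1 - lam) * pmf Q \<omega> = 0" by linarith
          then show ?thesis using False by simp
        qed
        then show "(if llr (pmf Q \<omega>) (m \<omega>) = l then pmf Q \<omega> else 0) = 0"
          by (simp add: PInf llr_inf)
      qed
      then show ?thesis using rhs by (simp add: L_def)
    qed
  next
    case MInf
    have "phi lam \<infinity> = Some \<infinity>" by (simp add: phi_def phi_arg_def)
    then have rhs: "phi_add_pmf lam L l = pmf L (-\<infinity>)" by (simp add: phi_add_pmf_def MInf)
    have "pmf (privacy_loss Q (mixture lam P Q)) l = pmf L (-\<infinity>)"
      by (rule fin) (auto simp: MInf llr_minf)
    then show ?thesis using rhs by (simp add: L_def)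
  next
    case (real r)
    define a where "a = 1 + (exp (-r) - 1) / lam"
    have pa: "phi_arg lam (-l) = ereal a" by (simp add: phi_arg_def real a_def)
    have cond: "llr (pmf Q x) (m x) = ereal r \<longleftrightarrow> (0 < pmf Q x \<and> pmf P x = a * pmf Q x)" for x
      unfolding m_def a_def by (rule pw_add_fin) (use lam in auto)
    consider "a < 0" | "a = 0" | "a > 0" by linarith
    then show ?thesis
    proof cases
      case 1
      then have "phi lam (-l) = None" by (simp add: phi_def pa)
      then have rhs: "phi_add_pmf lam L l = 0" by (simp add: phi_add_pmf_def)
      have "pmf (privacy_loss Q (mixture lam P Q)) l = 0"
      proof (rule zero)
        fix x
        have "\<not> (0 < pmf Q x \<and> pmf P x = a * pmf Q x)"
          using 1 pmf_nonneg[of P x] mult_neg_pos[of a "pmf Q x"] by smt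
        then show "(if llr (pmf Q x) (m x) = l then pmf Q x else 0) = 0"
          using cond real by auto
      qed
      then show ?thesis using rhs by (simp add: L_def)
    next
      case 2
      then have ph: "phi lam (-l) = Some (-\<infinity>)" by (simp add: phi_def pa)
      then have rhs: "phi_add_pmf lam L l = pmf L \<infinity>" by (simp add: phi_add_pmf_def)
      have "pmf (privacy_loss Q (mixture lam P Q)) l = pmf L \<infinity>"
      proof (rule fin)
        fix x
        show "(if llr (pmf Q x) (m x) = l then pmf Q x else 0) = (if llr (pmf Q x) (pmf P x) = \<infinity> then pmf Q x else 0)"
          using cond[of x] qq[of x] 2 real by (auto simp: llr_inf)
      qed
      then show ?thesis using rhs by (simp add: L_def)
    next
      case 3
      then have ph: "phi lam (-l) = Some (ereal (ln a))" by (simp add: phi_def pa)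
      then have rhs: "phi_add_pmf lam L l = pmf L (ereal (- ln a))" by (simp add: phi_add_pmf_def)
      have "pmf (privacy_loss Q (mixture lam P Q)) l = pmf L (ereal (- ln a))"
      proof (rule fin)
        fix x
        have c2: "llr (pmf Q x) (pmf P x) = ereal (- ln a) \<longleftrightarrow> (0 < pmf P x \<and> pmf Q x = exp (- ln a) * pmf P x)"
          by (rule llr_fin) auto
        have "(0 < pmf P x \<and> pmf Q x = exp (- ln a) * pmf P x) \<longleftrightarrow> (0 < pmf Q x \<and> pmf P x = a * pmf Q x)"
          using 3 by (auto simp: exp_minus field_simps) (metis zero_less_mult_pos)
        then show "(if llr (pmf Q x) (m x) = l then pmf Q x else 0) = (if llr (pmf Q x) (pmf P x) = ereal (- ln a) then pmf Q x else 0)"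
          using cond[of x] c2 real by auto
      qed
      then show ?thesis using rhs by (simp add: L_def)
    qed
  qed
qed


theorem mainTheorem1:
  fixes P Q :: "'a pmf" and lam :: real
  assumes "0 < lam" and "lam \<le> 1"
  shows "(\<forall>l. pmf (privacy_loss (mixture lam P Q) Q) l = phi_rem_pmf lam (privacy_loss P Q) l)
       \<and> (\<forall>l. pmf (privacy_loss Q (mixture lam P Q)) l = phi_add_pmf lam (privacy_loss Q P) l)"
  using rem_part[OF assms] add_part[OF assms] by blast

end
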